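(* Let $\mathcal{M}_{\mathbb{P}}=(\mathcal{M},\mathbb{P})$ be an uncertain parametric MDP, $\varphi$ a specification with a fixed threshold $\lambda$, and $\mathcal{U}_N$ a set of $N\ge1$ parameter instantiations sampled independently from $\mathbb{P}$. Let $N_{\neg\varphi}=|\{u\in\mathcal{U}_N:\mathcal{M}[u]\not\models\varphi\}|$ be the number of violating samples. Choose a confidence probability $\beta\in(0,1)$. Define $t^*(N)=0$, and for $k=0,\dots,N-1$ let $t^*(k)$ be the solution $t$ of \[\frac{1-\beta}{N}=\sum_{i=0}^{k}\binom{N}{i}(1-t)^i t^{N-i}.\] Then \[\mathbb{P}^N\Big\{F(\mathcal{M}_{\mathbb{P}},\varphi)\ \ge\ t^*(N_{\neg\varphi})\Big\}\ \ge\ \beta .\]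
   Context: A parametric MDP (pMDP) is $\mathcal{M}=(S,\mathit{Act},s_I,V,\mathcal{P})$ with finite state set $S$, finite action set $\mathit{Act}$, initial state $s_I$, finite parameter set $V$, and transition function $\mathcal{P}:S\times\mathit{Act}\times S\to\mathbb{Q}[V]$. The parameter space $\mathcal{V}_{\mathcal{M}}$ consists of instantiations $u:V\to\mathbb{R}$; $\mathcal{M}[u]$ is the MDP obtained by evaluating the polynomials at $u$, assumed well-defined and graph-preserving (nonzero transitions get values in $(0,1]$). An uncertain pMDP is $\mathcal{M}_{\mathbb{P}}=(\mathcal{M},\mathbb{P})$ with $\mathbb{P}$ a (possibly unknown) probability distribution over $\mathcal{V}_{\mathcal{M}}$. A specification $\varphi$ consists of a measure on MDPs (e.g. maximal/minimal reachability probability, expected reward), a comparison operator in $\{<,\le,\ge,>\}$ and a threshold $\lambda$; $\mathcal{M}[u]\models\varphi$ means the measure's value on $\mathcal{M}[u]$ compares to $\lambda$ as prescribed. The satisfaction probability is $F(\mathcal{M}_{\mathbb{P}},\varphi)=\int_{\mathcal{V}_{\mathcal{M}}}I_\varphi(u)\,d\mathbb{P}(u)$ with $I_\varphi(u)=1$ iff $\mathcal{M}[u]\models\varphi$, else $0$ (assumed measurable). $\mathbb{P}^N$ is the $N$-fold product measure governing $\mathcal{U}_N$. *)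

theory Defs
  imports "HOL-Probability.Probability"
begin

datatype cmp_op = CLt | CLe | CGe | CGt

fun cmp_holds :: "cmp_op \<Rightarrow> ereal \<Rightarrow> ereal \<Rightarrow> bool" where
  "cmp_holds CLt x l = (x < l)"
| "cmp_holds CLe x l = (x \<le> l)"
| "cmp_holds CGe x l = (x \<ge> l)"
| "cmp_holds CGt x l = (x > l)"

text \<open>Parameter instantiations are functions
  'v => real; the parametric transition function maps each triple to a function of the
  instantiation (the polynomial, viewed as a function).\<close>
record ('s, 'a) mdp =
  m_states :: "'s set"
  m_acts :: "'a set"
  m_init :: 's
  m_trans :: "'s \<Rightarrow> 'a \<Rightarrow> 's \<Rightarrow> real"

record ('s, 'a, 'v) pmdp =
  p_states :: "'s set"
  p_acts :: "'a set"
  p_init :: 's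
  p_params :: "'v set"
  p_trans :: "'s \<Rightarrow> 'a \<Rightarrow> 's \<Rightarrow> ('v \<Rightarrow> real) \<Rightarrow> real"

definition instantiate :: "('s, 'a, 'v) pmdp \<Rightarrow> ('v \<Rightarrow> real) \<Rightarrow> ('s, 'a) mdp" where
  "instantiate M u = \<lparr> m_states = p_states M, m_acts = p_acts M, m_init = p_init M,
                        m_trans = (\<lambda>s a s'. p_trans M s a s' u) \<rparr>"

text \<open>A specification: a measure on MDPs (e.g. max/min reachability probability,
  expected reward; values in the extended reals), a comparison operator and a threshold.\<close>
record ('s, 'a) spec =
  sp_measure :: "('s, 'a) mdp \<Rightarrow> ereal"
  sp_cmp :: cmp_op
  sp_threshold :: real

definition models :: "('s, 'a) mdp \<Rightarrow> ('s, 'a) spec \<Rightarrow> bool" where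
  "models D \<phi> = cmp_holds (sp_cmp \<phi>) (sp_measure \<phi> D) (ereal (sp_threshold \<phi>))"

text \<open>Satisfaction probability F(M_P, phi) = integral of the indicator I_phi w.r.t. P.\<close>
definition sat_prob :: "('v \<Rightarrow> real) measure \<Rightarrow> ('s, 'a, 'v) pmdp \<Rightarrow> ('s, 'a) spec \<Rightarrow> real" where
  "sat_prob P M \<phi> = measure P {u \<in> space P. models (instantiate M u) \<phi>}"

definition n_viol :: "('s, 'a, 'v) pmdp \<Rightarrow> ('s, 'a) spec \<Rightarrow> nat \<Rightarrow> (nat \<Rightarrow> ('v \<Rightarrow> real)) \<Rightarrow> nat" where
  "n_viol M \<phi> N U = card {i \<in> {..<N}. \<not> models (instantiate M (U i)) \<phi>}"

definition t_star :: "nat \<Rightarrow> real \<Rightarrow> nat \<Rightarrow> real" where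
  "t_star N \<beta> k = (if k \<ge> N then 0 else
     (THE t. t \<in> {0..1} \<and>
        (1 - \<beta>) / real N = (\<Sum>i\<le>k. real (N choose i) * (1 - t) ^ i * t ^ (N - i))))"

end

theory Submission
  imports Defs
begin


definition hk :: "nat \<Rightarrow> nat \<Rightarrow> real \<Rightarrow> real" where
  "hk N k t = (\<Sum>i\<le>k. real (N choose i) * (1 - t) ^ i * t ^ (N - i))"

lemma alg:
  fixes x1 x2 x3 x4 x5 x6 x7 x8 x9 x10 :: real
  assumes h1: "x1*x2 = x4*x5" and h2: "x1*x3 = x4*x6"
  shows "x1*x2*x7*x8 + (x4*(-x5*x7*x8) + x4*(x9*(x6*x10))) = x1*x3*x9*x10"
proof -
  have e1: "x1*x2*x7*x8 = x4*x5*x7*x8" unfolding h1 by (rule refl)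
  have e2: "x1*x3*x9*x10 = x4*x6*x9*x10" unfolding h2 by (rule refl)
  show ?thesis unfolding e1 e2 by (simp add: algebra_simps)
qed

lemma hk_deriv:
  assumes "k < N"
  shows "((hk N k) has_real_derivative
           (real N * real ((N - 1) choose k) * (1 - t) ^ k * t ^ (N - 1 - k))) (at t)"
  using assms
proof (induction k)
  case 0
  have e: "hk N 0 = (\<lambda>t. t ^ N)" by (auto simp: hk_def)
  show ?case unfolding e
    by (rule derivative_eq_intros refl)+ (simp add: power_0)
next
  case (Suc k)
  obtain n where N: "N = Suc k + Suc n" using Suc.prems
    by (metis add_Suc_right less_imp_Suc_add)
  have e: "hk N (Suc k) = (\<lambda>t. hk N k t + real (N choose Suc k) * (1 - t) ^ Suc k * t ^ Suc n)"
    by (auto simp: hk_def N)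
  have d1: "((\<lambda>t. real (N choose Suc k) * (1 - t) ^ Suc k * t ^ Suc n) has_real_derivative
     (real (N choose Suc k) * (- (real (Suc k)) * (1 - t) ^ k * t ^ Suc n)
      + real (N choose Suc k) * ((1 - t) ^ Suc k * (real (Suc n) * t ^ n)))) (at t)"
    by (rule derivative_eq_intros refl)+ (simp add: algebra_simps)
  have b1: "real N * real ((N - 1) choose k) = real (N choose Suc k) * real (Suc k)"
    using Suc_times_binomial_eq[of "N - 1" k] N by (metis of_nat_mult Suc_diff_1 zero_less_Suc add_Suc diff_Suc_1)
  have b2: "real N * real ((N - 1) choose Suc k) = real (N choose Suc k) * real (Suc n)"
  proof -
    have "(N - Suc k) * (N choose Suc k) = N * ((N - 1) choose Suc k)" by (rule binomial_absorb_comp)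
    moreover have "N - Suc k = Suc n" using N by simp
    ultimately show ?thesis by (metis of_nat_mult mult.commute)
  qed
  have nn: "N - 1 - k = Suc n" "N - 1 - Suc k = n" using N by auto
  show ?case
  proof -
    have D: "((\<lambda>t. hk N k t + real (N choose Suc k) * (1 - t) ^ Suc k * t ^ Suc n) has_real_derivative
     (real N * real ((N - 1) choose k) * (1 - t) ^ k * t ^ (N - 1 - k)) +
     (real (N choose Suc k) * (- (real (Suc k)) * (1 - t) ^ k * t ^ Suc n)
      + real (N choose Suc k) * ((1 - t) ^ Suc k * (real (Suc n) * t ^ n)))) (at t)"
      using Suc.IH[OF Suc_lessD[OF Suc.prems]] d1 by (rule DERIV_add)
    have Q: "(real N * real ((N - 1) choose k) * (1 - t) ^ k * t ^ (N - 1 - k)) +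
     (real (N choose Suc k) * (- (real (Suc k)) * (1 - t) ^ k * t ^ Suc n)
      + real (N choose Suc k) * ((1 - t) ^ Suc k * (real (Suc n) * t ^ n))) =
      real N * real ((N - 1) choose Suc k) * (1 - t) ^ Suc k * t ^ (N - 1 - Suc k)"
      unfolding nn by (rule alg[OF b1 b2])
    show ?thesis unfolding e using D by (simp only: Q)
  qed
qed

lemma hk_cont: "continuous_on S (hk N k)"
  unfolding hk_def by (intro continuous_intros)

lemma hk_strict_mono:
  assumes "k < N" "0 \<le> a" "a < b" "b \<le> 1"
  shows "hk N k a < hk N k b"
proof (rule DERIV_pos_imp_increasing_open[OF assms(3)])
  fix x assume x: "a < x" "x < b"
  have "0 < real N * real ((N - 1) choose k) * (1 - x) ^ k * x ^ (N - 1 - k)"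
    using x assms by (intro mult_pos_pos) auto
  then show "\<exists>y. DERIV (hk N k) x :> y \<and> 0 < y" using hk_deriv[OF assms(1)] by blast
qed (rule hk_cont)

lemma hk_0: "k < N \<Longrightarrow> hk N k 0 = 0"
  by (auto simp: hk_def intro!: sum.neutral)

lemma hk_1: "hk N k 1 = 1"
proof -
  have "hk N k 1 = (\<Sum>i\<in>{0}. real (N choose i) * (1 - 1) ^ i * 1 ^ (N - i))"
    unfolding hk_def by (rule sum.mono_neutral_right) auto
  then show ?thesis by simp
qed

lemma hk_mono_k:
  assumes "k' \<le> k" "0 \<le> t" "t \<le> 1"
  shows "hk N k' t \<le> hk N k t"
  unfolding hk_def using assms by (intro sum_mono2) auto

lemma t_star_prop:
  assumes "k < N" "0 < \<beta>" "\<beta> < 1"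
  shows "t_star N \<beta> k \<in> {0..1} \<and> hk N k (t_star N \<beta> k) = (1 - \<beta>) / real N"
proof -
  let ?c = "(1 - \<beta>) / real N"
  have c: "0 \<le> ?c" "?c \<le> 1" using assms by (auto simp: field_simps)
  obtain x where x: "0 \<le> x" "x \<le> 1" "hk N k x = ?c"
    using IVT[of "hk N k" 0 ?c 1] c hk_0[OF assms(1)] hk_1[of N k]
      continuous_on_interior[OF hk_cont[of UNIV]] by auto
  have uniq: "y = x" if y: "y \<in> {0..1}" "hk N k y = ?c" for y
  proof (cases "y < x")
    case True
    then have "hk N k y < hk N k x" using y x by (intro hk_strict_mono[OF assms(1)]) auto
    then show ?thesis using y x by simp
  next
    case False
    show ?thesis
    proof (rule ccontr)
      assume "y \<noteq> x"
      with False have "x < y" by simp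
      then have "hk N k x < hk N k y" using y x by (intro hk_strict_mono[OF assms(1)]) auto
      then show False using y x by simp
    qed
  qed
  have T: "(THE t. t \<in> {0..1} \<and> ?c = (\<Sum>i\<le>k. real (N choose i) * (1 - t) ^ i * t ^ (N - i))) = x"
  proof (rule the_equality)
    show "x \<in> {0..1} \<and> ?c = (\<Sum>i\<le>k. real (N choose i) * (1 - x) ^ i * x ^ (N - i))"
      using x unfolding hk_def by simp
  next
    fix t assume "t \<in> {0..1} \<and> ?c = (\<Sum>i\<le>k. real (N choose i) * (1 - t) ^ i * t ^ (N - i))"
    then show "t = x" using uniq[of t] unfolding hk_def by simp
  qed
  have "t_star N \<beta> k = x" unfolding t_star_def using assms(1) T by simp
  then show ?thesis using x by simp
qed


lemma count_measure:
  fixes P :: "'x measure" and A :: "'x set" and N :: nat and Q :: "nat \<Rightarrow> bool"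
  assumes P: "prob_space P" and A: "A \<in> sets P"
  defines "PM \<equiv> PiM {..<N} (\<lambda>_. P)"
  shows "{U \<in> space PM. Q (card {i\<in>{..<N}. U i \<notin> A})} \<in> sets PM \<and>
         measure PM {U \<in> space PM. Q (card {i\<in>{..<N}. U i \<notin> A})} =
         (\<Sum>S | S \<subseteq> {..<N} \<and> Q (card S). (1 - measure P A) ^ card S * measure P A ^ (N - card S))"
proof -
  interpret P: prob_space P by (rule P)
  interpret F: finite_product_prob_space "\<lambda>_. P" "{..<N}"
    by unfold_locales simp_all
  define E where "E S = PiE {..<N} (\<lambda>i. if i \<in> S then space P - A else A)" for S
  define SS where "SS = {S. S \<subseteq> {..<N} \<and> Q (card S)}"
  have finSS: "finite SS" unfolding SS_def by (rule finite_subset[of _ "Pow {..<N}"]) auto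
  have Esets: "E S \<in> sets PM" for S
    unfolding E_def PM_def by (rule sets_PiM_I_finite) (use A in auto)
  have eq: "{U \<in> space PM. Q (card {i\<in>{..<N}. U i \<notin> A})} = (\<Union>S\<in>SS. E S)"
  proof (intro equalityI subsetI)
    fix U assume U: "U \<in> {U \<in> space PM. Q (card {i\<in>{..<N}. U i \<notin> A})}"
    then have Us: "U \<in> PiE {..<N} (\<lambda>_. space P)" unfolding PM_def space_PiM by simp
    have "U \<in> E {i\<in>{..<N}. U i \<notin> A}"
      unfolding E_def using Us by (auto simp: PiE_iff)
    moreover have "{i\<in>{..<N}. U i \<notin> A} \<in> SS" using U unfolding SS_def by auto
    ultimately show "U \<in> (\<Union>S\<in>SS. E S)" by blast
  next
    fix U assume "U \<in> (\<Union>S\<in>SS. E S)"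
    then obtain S where S: "S \<in> SS" "U \<in> E S" by blast
    have sp: "U \<in> space PM" using S(2) A sets.sets_into_space[OF A]
      unfolding E_def PM_def space_PiM by (auto simp: PiE_iff split: if_splits)
    have "{i\<in>{..<N}. U i \<notin> A} = S" using S unfolding E_def SS_def by (auto simp: PiE_iff split: if_splits)
    then show "U \<in> {U \<in> space PM. Q (card {i\<in>{..<N}. U i \<notin> A})}"
      using sp S(1) unfolding SS_def by auto
  qed
  have disj: "disjoint_family_on E SS"
    unfolding disjoint_family_on_def
  proof (intro ballI impI)
    fix S T assume ST: "S \<in> SS" "T \<in> SS" "S \<noteq> T"
    have "\<exists>i. (i \<in> S) \<noteq> (i \<in> T)"
    proof (rule ccontr)
      assume "\<not> (\<exists>i. (i \<in> S) \<noteq> (i \<in> T))"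
      then have "S = T" by (intro set_eqI) simp
      then show False using ST(3) by simp
    qed
    then obtain i where i0: "(i \<in> S) \<noteq> (i \<in> T)" by blast
    have iN: "i < N" using i0 ST(1,2) unfolding SS_def by auto
    show "E S \<inter> E T = {}"
    proof (rule ccontr)
      assume "E S \<inter> E T \<noteq> {}"
      then obtain U where U: "U \<in> E S" "U \<in> E T" by blast
      have "U i \<in> (if i \<in> S then space P - A else A)"
        using PiE_mem[OF U(1)[unfolded E_def]] iN by simp
      moreover have "U i \<in> (if i \<in> T then space P - A else A)"
        using PiE_mem[OF U(2)[unfolded E_def]] iN by simp
      ultimately show False using i0 by (cases "i \<in> S") auto
    qed
  qed
  have mE: "measure PM (E S) = (1 - measure P A) ^ card S * measure P A ^ (N - card S)"
    if S: "S \<subseteq> {..<N}" for S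
  proof -
    have "measure PM (E S) = (\<Prod>i\<in>{..<N}. measure P (if i \<in> S then space P - A else A))"
      unfolding PM_def E_def by (rule F.finite_measure_PiM_emb) (simp add: A sets.compl_sets)
    also have "\<dots> = (\<Prod>i\<in>{..<N}. if i \<in> S then 1 - measure P A else measure P A)"
      by (rule prod.cong) (simp_all add: P.prob_compl[OF A])
    also have "\<dots> = (\<Prod>i\<in>{..<N} \<inter> {i. i \<in> S}. 1 - measure P A) * (\<Prod>i\<in>{..<N} \<inter> - {i. i \<in> S}. measure P A)"
      by (rule prod.If_cases) simp
    also have "\<dots> = (1 - measure P A) ^ card S * measure P A ^ (N - card S)"
    proof -
      have c1: "{..<N} \<inter> {i. i \<in> S} = S" using S by auto
      have "{..<N} \<inter> - {i. i \<in> S} = {..<N} - S" by auto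
      then have c2: "card ({..<N} \<inter> - {i. i \<in> S}) = N - card S"
        using S by (simp add: card_Diff_subset finite_subset)
      show ?thesis by (simp only: prod_constant c1 c2)
    qed
    finally show ?thesis .
  qed
  have "measure PM (\<Union>S\<in>SS. E S) = (\<Sum>S\<in>SS. measure PM (E S))"
    by (rule measure_finite_Union) (use finSS Esets disj in \<open>auto simp: PM_def F.emeasure_eq_measure\<close>)
  also have "\<dots> = (\<Sum>S\<in>SS. (1 - measure P A) ^ card S * measure P A ^ (N - card S))"
    by (rule sum.cong) (auto simp: SS_def mE)
  finally have m: "measure PM (\<Union>S\<in>SS. E S) = (\<Sum>S\<in>SS. (1 - measure P A) ^ card S * measure P A ^ (N - card S))" .
  have s: "(\<Union>S\<in>SS. E S) \<in> sets PM" using finSS Esets by auto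
  show ?thesis unfolding eq using s m by (simp add: SS_def)
qed

lemma sum_subsets_card:
  fixes f :: "nat \<Rightarrow> real"
  shows "(\<Sum>S | S \<subseteq> {..<N} \<and> card S \<le> k. f (card S)) = (\<Sum>i\<le>k. real (N choose i) * f i)"
proof -
  let ?SS = "{S. S \<subseteq> {..<N} \<and> card S \<le> k}"
  have fin: "finite ?SS" by (rule finite_subset[of _ "Pow {..<N}"]) auto
  have "(\<Sum>S\<in>?SS. f (card S)) = (\<Sum>i\<in>{..k}. \<Sum>S\<in>{S \<in> ?SS. card S = i}. f (card S))"
    by (rule sum.group[symmetric]) (use fin in auto)
  also have "\<dots> = (\<Sum>i\<le>k. real (N choose i) * f i)"
  proof (rule sum.cong[OF refl])
    fix i assume i: "i \<in> {..k}"
    have "{S \<in> ?SS. card S = i} = {S. S \<subseteq> {..<N} \<and> card S = i}" using i by auto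
    then have "(\<Sum>S\<in>{S \<in> ?SS. card S = i}. f (card S)) = (\<Sum>S\<in>{S. S \<subseteq> {..<N} \<and> card S = i}. f i)"
      by (intro sum.cong) auto
    also have "\<dots> = real (N choose i) * f i" using n_subsets[of "{..<N}" i] by simp
    finally show "(\<Sum>S\<in>{S \<in> ?SS. card S = i}. f (card S)) = real (N choose i) * f i" .
  qed
  finally show ?thesis .
qed


theorem theorem2:
  fixes P :: "('v \<Rightarrow> real) measure"
    and M :: "('s, 'a, 'v) pmdp"
    and \<phi> :: "('s, 'a) spec"
    and N :: nat and \<beta> :: real
  assumes "prob_space P"
    and "finite (p_states M)" and "finite (p_acts M)" and "finite (p_params M)"
    and "p_init M \<in> p_states M"
    and "{u \<in> space P. models (instantiate M u) \<phi>} \<in> sets P"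
    and "N \<ge> 1"
    and "0 < \<beta>" and "\<beta> < 1"
  shows "measure (PiM {..<N} (\<lambda>_. P))
           {U \<in> space (PiM {..<N} (\<lambda>_. P)).
              sat_prob P M \<phi> \<ge> t_star N \<beta> (n_viol M \<phi> N U)} \<ge> \<beta>"
proof -
  interpret P: prob_space P by fact
  define A where "A = {u \<in> space P. models (instantiate M u) \<phi>}"
  define p where "p = sat_prob P M \<phi>"
  have pA: "p = measure P A" unfolding p_def sat_prob_def A_def ..
  have A: "A \<in> sets P" using assms(6) unfolding A_def .
  have p01: "0 \<le> p" "p \<le> 1" using pA by auto
  define PM where "PM = PiM {..<N} (\<lambda>_. P)"
  interpret PMp: prob_space PM unfolding PM_def by (rule prob_space_PiM) (rule assms(1))
  define K where "K U = card {i\<in>{..<N}. U i \<notin> A}" for U :: "nat \<Rightarrow> 'v \<Rightarrow> real"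
  have nv: "n_viol M \<phi> N U = K U" if U: "U \<in> space PM" for U
  proof -
    have "U i \<in> space P" if "i < N" for i
      using U that unfolding PM_def space_PiM by (auto simp: PiE_iff)
    then have "{i\<in>{..<N}. \<not> models (instantiate M (U i)) \<phi>} = {i\<in>{..<N}. U i \<notin> A}"
      unfolding A_def by auto
    then show ?thesis unfolding n_viol_def K_def by simp
  qed
  define c where "c = (1 - \<beta>) / real N"
  have c: "c \<le> 1 - \<beta>" "0 < c"
  proof -
    have "real N \<ge> 1" using assms(7) by simp
    then have "(1 - \<beta>) / real N \<le> (1 - \<beta>) / 1"
      using assms(9) by (intro divide_left_mono) auto
    then show "c \<le> 1 - \<beta>" unfolding c_def by simp
    show "0 < c" unfolding c_def using assms(7,9) by simp
  qed
  have key: "k < N \<and> hk N k p < c" if pk: "p < t_star N \<beta> k" for k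
  proof -
    have kN: "k < N"
    proof (rule ccontr)
      assume "\<not> k < N"
      then have "t_star N \<beta> k = 0" unfolding t_star_def by simp
      then show False using pk p01 by simp
    qed
    have ts: "t_star N \<beta> k \<in> {0..1} \<and> hk N k (t_star N \<beta> k) = (1 - \<beta>) / real N"
      by (rule t_star_prop[OF kN assms(8,9)])
    have "hk N k p < hk N k (t_star N \<beta> k)"
      using ts pk p01 by (intro hk_strict_mono[OF kN]) auto
    then show ?thesis using ts kN unfolding c_def by simp
  qed
  define bad where "bad = {U \<in> space PM. p < t_star N \<beta> (K U)}"
  have cm: "{U \<in> space PM. Q (K U)} \<in> sets PM \<and>
         measure PM {U \<in> space PM. Q (K U)} =
         (\<Sum>S | S \<subseteq> {..<N} \<and> Q (card S). (1 - p) ^ card S * p ^ (N - card S))" for Q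
    using count_measure[OF assms(1) A, of N Q] unfolding PM_def K_def pA .
  have bad_sets: "bad \<in> sets PM" unfolding bad_def using cm[of "\<lambda>k. p < t_star N \<beta> k"] by simp
  have good: "{U \<in> space PM. sat_prob P M \<phi> \<ge> t_star N \<beta> (n_viol M \<phi> N U)} = space PM - bad"
    unfolding bad_def p_def[symmetric] using nv by auto
  have badle: "measure PM bad \<le> 1 - \<beta>"
  proof (cases "\<exists>k<N. hk N k p < c")
    case False
    then have "bad = {}" unfolding bad_def using key by blast
    then show ?thesis using assms(9) by simp
  next
    case True
    define k0 where "k0 = Max {k. k < N \<and> hk N k p < c}"
    have fin: "finite {k. k < N \<and> hk N k p < c}" by simp
    have k0in: "k0 \<in> {k. k < N \<and> hk N k p < c}"
      unfolding k0_def using True by (intro Max_in fin) auto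
    have sub: "bad \<subseteq> {U \<in> space PM. K U \<le> k0}"
    proof
      fix U assume "U \<in> bad"
      then have "U \<in> space PM" "K U \<in> {k. k < N \<and> hk N k p < c}" unfolding bad_def using key by auto
      then show "U \<in> {U \<in> space PM. K U \<le> k0}" unfolding k0_def using fin by auto
    qed
    have "measure PM bad \<le> measure PM {U \<in> space PM. K U \<le> k0}"
      using sub cm[of "\<lambda>k. k \<le> k0"] by (intro PMp.finite_measure_mono) auto
    also have "\<dots> = (\<Sum>S | S \<subseteq> {..<N} \<and> card S \<le> k0. (1 - p) ^ card S * p ^ (N - card S))"
      using cm[of "\<lambda>k. k \<le> k0"] by simp
    also have "\<dots> = (\<Sum>i\<le>k0. real (N choose i) * ((1 - p) ^ i * p ^ (N - i)))"
      by (rule sum_subsets_card)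
    also have "\<dots> = hk N k0 p" unfolding hk_def by (simp add: mult.assoc)
    also have "\<dots> < c" using k0in by simp
    finally show ?thesis using c by simp
  qed
  have "measure PM (space PM - bad) = 1 - measure PM bad"
    by (rule PMp.prob_compl[OF bad_sets])
  then show ?thesis using good badle unfolding PM_def by simp
qed

end
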